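(* Let $\mathfrak{n}\in A_+$ and $\gamma=\begin{pmatrix}a&b\\c&d\end{pmatrix}\in\mathrm{GL}_2(A)$. (1) Let $\ell=\max(\deg c,\deg d)$, and put $\epsilon=1$ if $\deg c\ge\deg d$ and $\epsilon=0$ otherwise. Then there exist $u\in K_\infty$ and $\gamma_0\in\Gamma_0(\mathfrak{n})$ such that $\gamma_0\gamma e_0=e_g$ with $g=\begin{pmatrix}\pi_\infty^{2\ell+\epsilon}&u\\0&1\end{pmatrix}\begin{pmatrix}0&1\\\pi_\infty&0\end{pmatrix}^{\epsilon}$. (2) Let $x,y\in A$ with $\gcd(x,y)=1=\gcd(\mathfrak{n},cx+dy)$, let $\delta=\max(\deg x,\deg y)$, and put $\epsilon=0$ if $\deg x>\deg y$ and $\epsilon=1$ otherwise. Then there exist $u\in K_\infty$ and $\gamma_0\in\Gamma_0(\mathfrak{n})$ such that $\gamma_0\gamma e_0=e_g$ with $g=w_\mathfrak{n}\begin{pmatrix}\pi_\infty^{\deg\mathfrak{n}+2\delta+\epsilon}&u\\0&1\end{pmatrix}\begin{pmatrix}0&1\\\pi_\infty&0\end{pmatrix}^{\epsilon}$, where $w_\mathfrak{n}=\begin{pmatrix}0&-1\\\mathfrak{n}&0\end{pmatrix}$.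
   Context: $\mathbb{F}_q$ a finite field, $A=\mathbb{F}_q[\theta]$, $A_+$ the monic polynomials, $\deg0=-\infty$; $\pi_\infty=\theta^{-1}$, $K_\infty=\mathbb{F}_q((\pi_\infty))$, $O_\infty=\mathbb{F}_q[[\pi_\infty]]$, $\mathcal{I}_\infty$ the Iwahori subgroup of matrices in $\mathrm{GL}_2(O_\infty)$ with lower-left entry in $\pi_\infty O_\infty$. The oriented edges of the Bruhat–Tits tree are the cosets $\mathrm{GL}_2(K_\infty)/K_\infty^\times\mathcal{I}_\infty$; $e_g$ denotes the edge (coset) of $g\in\mathrm{GL}_2(K_\infty)$, $\mathrm{GL}_2(K_\infty)$ acts by left multiplication, and $e_0=e_I$ for the identity matrix $I$. $\Gamma_0(\mathfrak{n})=\{\begin{pmatrix}a&b\\c&d\end{pmatrix}\in\mathrm{GL}_2(A):\mathfrak{n}\mid c\}$. *)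

theory Defs
  imports "HOL-Computational_Algebra.Computational_Algebra"
          "HOL-Computational_Algebra.Formal_Laurent_Series"
          "HOL-Library.Extended_Real"
begin

text \<open>2x2 matrices (a, b, c, d) standing for the matrix with rows (a b) and (c d).\<close>
type_synonym 'k mat2 = "'k \<times> 'k \<times> 'k \<times> 'k"

definition mmul :: "'k::comm_ring_1 mat2 \<Rightarrow> 'k mat2 \<Rightarrow> 'k mat2" where
  "mmul M N = (case M of (a, b, c, d) \<Rightarrow> case N of (a', b', c', d') \<Rightarrow>
     (a*a' + b*c', a*b' + b*d', c*a' + d*c', c*b' + d*d'))"

definition mdet :: "'k::comm_ring_1 mat2 \<Rightarrow> 'k" where
  "mdet M = (case M of (a, b, c, d) \<Rightarrow> a*d - b*c)"

definition mscale :: "'k::comm_ring_1 \<Rightarrow> 'k mat2 \<Rightarrow> 'k mat2" where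
  "mscale z M = (case M of (a, b, c, d) \<Rightarrow> (z*a, z*b, z*c, z*d))"

definition mId :: "'k::comm_ring_1 mat2" where
  "mId = (1, 0, 0, 1)"

fun mpow :: "'k::comm_ring_1 mat2 \<Rightarrow> nat \<Rightarrow> 'k mat2" where
  "mpow M 0 = mId"
| "mpow M (Suc n) = mmul M (mpow M n)"

definition mmap :: "('k \<Rightarrow> 'l) \<Rightarrow> 'k mat2 \<Rightarrow> 'l mat2" where
  "mmap f M = (case M of (a, b, c, d) \<Rightarrow> (f a, f b, f c, f d))"

definition pdeg :: "'a::zero poly \<Rightarrow> ereal" where
  "pdeg p = (if p = 0 then -\<infinity> else ereal (real (degree p)))"

text \<open>GL_2(A) and Gamma_0(n), A = F_q[theta] represented as 'a poly.\<close>
definition GL2A :: "'a::field poly mat2 set" where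
  "GL2A = {M. is_unit (mdet M)}"

definition Gamma0 :: "'a::field poly \<Rightarrow> 'a poly mat2 set" where
  "Gamma0 n = {M \<in> GL2A. case M of (a, b, c, d) \<Rightarrow> n dvd c}"

text \<open>K_infinity = F_q((pi)), pi = 1/theta, represented as 'a fls with fls_X = pi.\<close>
abbreviation piinf :: "'a::field fls" where
  "piinf \<equiv> fls_X"

definition embA :: "'a::field poly \<Rightarrow> 'a fls" where
  "embA p = poly (map_poly fls_const p) fls_X_inv"

definition Oinf :: "'a::field fls set" where
  "Oinf = {f. f = 0 \<or> fls_subdegree f \<ge> 0}"

definition Iwahori :: "'a::field fls mat2 set" where
  "Iwahori = {M. case M of (a, b, c, d) \<Rightarrow>
      a \<in> Oinf \<and> b \<in> Oinf \<and> d \<in> Oinf \<and> c \<in> (\<lambda>x. piinf * x) ` Oinf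
      \<and> mdet M \<noteq> 0 \<and> inverse (mdet M) \<in> Oinf}"

text \<open>The oriented edge e_g = g K_infinity^* I_infinity, as a coset (set of matrices).\<close>
definition edge :: "'a::field fls mat2 \<Rightarrow> 'a fls mat2 set" where
  "edge g = {mmul g (mmul (mscale z mId) k) | z k. z \<noteq> 0 \<and> k \<in> Iwahori}"

definition e0 :: "'a::field fls mat2 set" where
  "e0 = edge mId"

definition act :: "'a::field fls mat2 \<Rightarrow> 'a fls mat2 set \<Rightarrow> 'a fls mat2 set" where
  "act h E = mmul h ` E"

definition actA :: "'a::field poly mat2 \<Rightarrow> 'a fls mat2 set \<Rightarrow> 'a fls mat2 set" where
  "actA h E = act (mmap embA h) E"

end

theory Submission
  imports Defs
begin

unbundle fps_syntax



lemma embA_pCons: "embA (pCons a p) = fls_const a + fls_X_inv * (embA p :: 'a::field fls)"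
  unfolding embA_def by (simp add: map_poly_pCons)

lemma embA_0[simp]: "embA 0 = 0" by (simp add: embA_def)

lemma embA_nth: "(embA p :: 'a::field fls) $$ j = (if j \<le> 0 then coeff p (nat (-j)) else 0)"
proof (induction p arbitrary: j)
  case 0 then show ?case by simp
next
  case (pCons a p)
  show ?case
    by (auto simp: embA_pCons fls_X_inv_times_conv_shift pCons.IH coeff_pCons
        split: nat.splits) (auto simp: nat_eq_iff)
qed

lemma embA_add[simp]: "embA (p + q) = (embA p + embA q :: 'a::field fls)"
  by (rule fls_eqI) (simp add: embA_nth)

lemma embA_uminus[simp]: "embA (- p) = (- embA p :: 'a::field fls)"
  by (rule fls_eqI) (simp add: embA_nth)

lemma embA_diff[simp]: "embA (p - q) = (embA p - embA q :: 'a::field fls)"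
  by (rule fls_eqI) (simp add: embA_nth)

lemma embA_smult: "embA (smult a q) = (fls_const a * embA q :: 'a::field fls)"
  by (rule fls_eqI) (simp add: embA_nth)

lemma embA_const[simp]: "embA [:a:] = (fls_const a :: 'a::field fls)"
  by (simp add: embA_pCons)

lemma embA_1[simp]: "embA 1 = (1 :: 'a::field fls)"
  by (simp add: one_pCons)

lemma embA_mult[simp]: "embA (p * q) = (embA p * embA q :: 'a::field fls)"
proof (induction p)
  case 0 then show ?case by simp
next
  case (pCons a p)
  have "pCons a p * q = smult a q + pCons 0 (p * q)" by (simp add: mult_pCons_left)
  then show ?case
    by (simp add: embA_smult embA_pCons pCons.IH algebra_simps)
qed

lemma embA_subdegree:
  assumes "p \<noteq> 0" shows "fls_subdegree (embA p :: 'a::field fls) = - int (degree p)"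
proof (rule fls_subdegree_eqI)
  show "(embA p :: 'a fls) $$ (- int (degree p)) \<noteq> 0" using assms by (simp add: embA_nth)
  fix k :: int assume "k < - int (degree p)"
  then show "(embA p :: 'a fls) $$ k = 0"
    by (auto simp: embA_nth intro!: coeff_eq_0)
qed

lemma embA_eq_0_iff[simp]: "(embA p :: 'a::field fls) = 0 \<longleftrightarrow> p = 0"
proof
  assume "embA p = (0 :: 'a fls)"
  then have "\<forall>j. coeff p j = 0"
    by (metis (no_types) embA_nth[of p "- int _"] fls_zero_nth nat_int neg_0_le_iff_le of_nat_0_le_iff minus_minus)
  then show "p = 0" by (simp add: poly_eq_iff)
qed simp

lemma Oinf_iff: "f \<in> Oinf \<longleftrightarrow> fls_subdegree f \<ge> 0"
  by (auto simp: Oinf_def)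

lemma Oinf_add: "f \<in> Oinf \<Longrightarrow> g \<in> Oinf \<Longrightarrow> f + g \<in> Oinf"
  unfolding Oinf_iff
  by (cases "f + g = 0") (auto dest!: fls_plus_subdegree)

lemma Oinf_uminus: "f \<in> Oinf \<Longrightarrow> - f \<in> Oinf"
  unfolding Oinf_iff by simp

lemma Oinf_diff: "f \<in> Oinf \<Longrightarrow> g \<in> Oinf \<Longrightarrow> f - g \<in> Oinf"
  using Oinf_add[of f "-g"] Oinf_uminus[of g] by simp

lemma Oinf_mult: "f \<in> Oinf \<Longrightarrow> g \<in> Oinf \<Longrightarrow> f * g \<in> Oinf"
  unfolding Oinf_iff by (rule fls_mult_subdegree_ge_0)

lemma Oinf_0[simp]: "0 \<in> Oinf" and Oinf_1[simp]: "1 \<in> Oinf"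
  by (auto simp: Oinf_iff)

lemma Oinf_X[simp]: "fls_X \<in> Oinf"
  by (auto simp: Oinf_iff)



lemma mmul_assoc: "mmul (mmul A B) C = mmul A (mmul B (C :: 'k::comm_ring_1 mat2))"
  by (cases A; cases B; cases C) (simp add: mmul_def algebra_simps)

lemma mmul_mId_right[simp]: "mmul A mId = (A :: 'k::comm_ring_1 mat2)"
  by (cases A) (simp add: mmul_def mId_def)

lemma mmul_mId_left[simp]: "mmul mId A = (A :: 'k::comm_ring_1 mat2)"
  by (cases A) (simp add: mmul_def mId_def)

lemma mscale_mId_mmul: "mmul (mscale z mId) k = mscale z (k :: 'k::comm_ring_1 mat2)"
  by (cases k) (simp add: mmul_def mId_def mscale_def)

lemma mmul_mscale_right: "mmul A (mscale z B) = mscale z (mmul A (B :: 'k::comm_ring_1 mat2))"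
  by (cases A; cases B) (simp add: mmul_def mscale_def algebra_simps)

lemma mscale_mscale: "mscale z (mscale w A) = mscale (z * w) (A :: 'k::comm_ring_1 mat2)"
  by (cases A) (simp add: mscale_def algebra_simps)

lemma mscale_1[simp]: "mscale 1 A = (A :: 'k::comm_ring_1 mat2)"
  by (cases A) (simp add: mscale_def)

lemma mdet_mmul: "mdet (mmul A B) = mdet A * mdet (B :: 'k::comm_ring_1 mat2)"
  by (cases A; cases B) (simp add: mmul_def mdet_def algebra_simps)

lemma edge_alt: "edge g = {mscale z (mmul g k) | z k. z \<noteq> 0 \<and> k \<in> Iwahori}"
  unfolding edge_def by (simp add: mscale_mId_mmul mmul_mscale_right)

lemma piO_iff: "c \<in> (\<lambda>x. fls_X * x) ` Oinf \<longleftrightarrow> (c = 0 \<or> fls_subdegree (c :: 'a::field fls) \<ge> 1)"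
proof
  assume "c \<in> (\<lambda>x. fls_X * x) ` Oinf"
  then obtain x where "x \<in> Oinf" "c = fls_X * x" by auto
  then show "c = 0 \<or> fls_subdegree c \<ge> 1"
    by (cases "x = 0") (auto simp: Oinf_iff)
next
  assume a: "c = 0 \<or> fls_subdegree c \<ge> 1"
  show "c \<in> (\<lambda>x. fls_X * x) ` Oinf"
  proof (cases "c = 0")
    case True then show ?thesis by (auto intro!: image_eqI[of _ _ 0])
  next
    case False
    have X0: "fls_X \<noteq> (0::'a fls)" by simp
    have "c = fls_X * (c / fls_X)" by (metis X0 nonzero_mult_div_cancel_left times_divide_eq_right)
    moreover have "c / fls_X \<in> Oinf" using False a
      by (simp add: Oinf_iff fls_divide_subdegree)
    ultimately show ?thesis by blast
  qed
qed

lemma Iwahori_mult: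
  fixes k k' :: "'a::field fls mat2"
  assumes "k \<in> Iwahori" "k' \<in> Iwahori" shows "mmul k k' \<in> Iwahori"
proof -
  obtain a b c d where k: "k = (a,b,c,d)" by (cases k)
  obtain a' b' c' d' where k': "k' = (a',b',c',d')" by (cases k')
  from assms obtain x x' where x: "x \<in> Oinf" "c = fls_X * x" and x': "x' \<in> Oinf" "c' = fls_X * x'"
    by (auto simp: Iwahori_def k k')
  have O: "a \<in> Oinf" "b \<in> Oinf" "d \<in> Oinf" "a' \<in> Oinf" "b' \<in> Oinf" "d' \<in> Oinf"
    "inverse (mdet k) \<in> Oinf" "inverse (mdet k') \<in> Oinf" "mdet k \<noteq> 0" "mdet k' \<noteq> 0"
    using assms by (auto simp: Iwahori_def k k')
  have cO: "c \<in> Oinf" "c' \<in> Oinf" using x x' by (auto intro: Oinf_mult)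
  have "c * a' + d * c' = fls_X * (x * a' + d * x')" using x x' by (simp add: algebra_simps)
  moreover have "x * a' + d * x' \<in> Oinf" using O x x' by (auto intro: Oinf_add Oinf_mult)
  ultimately have ll: "c * a' + d * c' \<in> (\<lambda>x. fls_X * x) ` Oinf" by blast
  show ?thesis
    using O cO ll unfolding Iwahori_def
    by (auto simp: k k' mmul_def mdet_mmul[of k k', unfolded k k' mmul_def, simplified]
          intro!: Oinf_add Oinf_mult)
qed

definition minv :: "'a::field mat2 \<Rightarrow> 'a mat2" where
  "minv M = (case M of (a,b,c,d) \<Rightarrow> mscale (inverse (mdet M)) (d, -b, -c, a))"

lemma mmul_minv: assumes "mdet M \<noteq> 0" shows "mmul M (minv M) = (mId :: 'a::field mat2)"
proof -
  obtain a b c d where M: "M = (a,b,c,d)" by (cases M)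
  define D where "D = a*d - b*c"
  have D: "D \<noteq> 0" using assms by (simp add: M mdet_def D_def)
  have e1: "a * (inverse D * d) + b * (inverse D * - c) = inverse D * D" by (simp add: D_def algebra_simps)
  have e2: "c * (inverse D * - b) + d * (inverse D * a) = inverse D * D" by (simp add: D_def algebra_simps)
  have e3: "a * (inverse D * - b) + b * (inverse D * a) = 0" by (simp add: algebra_simps)
  have e4: "c * (inverse D * d) + d * (inverse D * - c) = 0" by (simp add: algebra_simps)
  show ?thesis using D e1 e2 e3 e4
    by (simp add: M minv_def mmul_def mscale_def mdet_def mId_def D_def[symmetric])
qed

lemma Iwahori_minv:
  fixes k :: "'a::field fls mat2"
  assumes "k \<in> Iwahori" shows "minv k \<in> Iwahori"
proof -
  obtain a b c d where k: "k = (a,b,c,d)" by (cases k)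
  from assms obtain x where x: "x \<in> Oinf" "c = fls_X * x"
    by (auto simp: Iwahori_def k)
  have O: "a \<in> Oinf" "b \<in> Oinf" "d \<in> Oinf"
    "inverse (mdet k) \<in> Oinf" "mdet k \<noteq> 0"
    using assms by (auto simp: Iwahori_def k)
  have cO: "c \<in> Oinf" using x by (auto intro: Oinf_mult)
  have detO: "mdet k \<in> Oinf" using O cO by (simp add: k mdet_def Oinf_diff Oinf_mult)
  have ms: "mdet (mscale z M) = z * z * mdet M" for z and M :: "'a fls mat2"
    by (cases M) (simp add: mscale_def mdet_def algebra_simps)
  have "mdet (d, -b, -c, a) = mdet k" by (simp add: k mdet_def algebra_simps)
  then have dm: "mdet (minv k) = inverse (mdet k)"
    using O(5) by (simp add: minv_def k ms del: mdet_def)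
  have "- c * inverse (mdet k) = fls_X * (- x * inverse (mdet k))" using x by simp
  moreover have "- x * inverse (mdet k) \<in> Oinf" using x O by (auto intro: Oinf_mult Oinf_uminus)
  ultimately have ll: "- c * inverse (mdet k) \<in> (\<lambda>x. fls_X * x) ` Oinf" by blast
  show ?thesis unfolding Iwahori_def
    using O ll detO dm
    by (auto simp: minv_def k mscale_def mult.commute intro!: Oinf_mult Oinf_uminus)
qed

lemma edge_eq:
  fixes g h :: "'a::field fls mat2"
  assumes z: "z \<noteq> 0" and k: "k \<in> Iwahori" and h: "h = mmul g (mmul (mscale z mId) k)"
  shows "edge h = edge g"
proof
  have h': "h = mscale z (mmul g k)" using h by (simp add: mscale_mId_mmul mmul_mscale_right)
  show "edge h \<subseteq> edge g"
  proof
    fix e assume "e \<in> edge h"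
    then obtain z' k' where e: "e = mscale z' (mmul h k')" "z' \<noteq> 0" "k' \<in> Iwahori"
      by (auto simp: edge_alt)
    have "mmul (mscale z (mmul g k)) k' = mscale z (mmul g (mmul k k'))"
      by (cases g; cases k; cases k') (simp add: mmul_def mscale_def algebra_simps)
    then have "e = mscale (z' * z) (mmul g (mmul k k'))"
      by (simp add: e h' mscale_mscale mult.commute)
    moreover have "mmul k k' \<in> Iwahori" using k e(3) by (rule Iwahori_mult)
    moreover have "z' * z \<noteq> 0" using z e(2) by simp
    ultimately show "e \<in> edge g" unfolding edge_alt by blast
  qed
  show "edge g \<subseteq> edge h"
  proof
    fix e assume "e \<in> edge g"
    then obtain z' k' where e: "e = mscale z' (mmul g k')" "z' \<noteq> 0" "k' \<in> Iwahori"
      by (auto simp: edge_alt)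
    have dk: "mdet k \<noteq> 0" using k by (cases k) (auto simp: Iwahori_def)
    have "mmul h (mmul (minv k) k') = mscale z (mmul (mmul g (mmul k (minv k))) k')"
      by (cases g; cases k; cases k'; cases "minv k") (simp add: h' mmul_def mscale_def algebra_simps)
    also have "\<dots> = mscale z (mmul g k')" using dk by (simp add: mmul_minv)
    finally have "e = mscale (z' / z) (mmul h (mmul (minv k) k'))"
      using z by (simp add: e mscale_mscale)
    moreover have "mmul (minv k) k' \<in> Iwahori" using Iwahori_minv[OF k] e(3) by (rule Iwahori_mult)
    moreover have "z' / z \<noteq> 0" using z e(2) by simp
    ultimately show "e \<in> edge h" unfolding edge_alt by blast
  qed
qed

lemma act_edge: "mmul h ` edge g = edge (mmul h (g :: 'a::field fls mat2))"
proof -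
  have r: "mmul h (mscale z (mmul g k)) = mscale z (mmul (mmul h g) k)" for z k
    by (simp add: mmul_mscale_right mmul_assoc)
  show ?thesis unfolding edge_alt
  proof (intro equalityI subsetI)
    fix x assume "x \<in> mmul h ` {mscale z (mmul g k) |z k. z \<noteq> 0 \<and> k \<in> Iwahori}"
    then show "x \<in> {mscale z (mmul (mmul h g) k) |z k. z \<noteq> 0 \<and> k \<in> Iwahori}"
      using r by blast
  next
    fix x assume "x \<in> {mscale z (mmul (mmul h g) k) |z k. z \<noteq> 0 \<and> k \<in> Iwahori}"
    then obtain z k where "x = mscale z (mmul (mmul h g) k)" "z \<noteq> 0" "k \<in> Iwahori" by blast
    then show "x \<in> mmul h ` {mscale z (mmul g k) |z k. z \<noteq> 0 \<and> k \<in> Iwahori}"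
      using r[of z k, symmetric] by blast
  qed
qed



lemma X_shift1[simp]: "fls_X * fls_shift 1 (C :: 'a::field fls) = C"
  "fls_shift 1 C * fls_X = C"
  by (simp_all add: fls_X_times_conv_shift)

lemma piO_div:
  fixes C D :: "'a::field fls"
  assumes "D \<noteq> 0" "C = 0 \<or> fls_subdegree C > fls_subdegree D"
  shows "C / D \<in> (\<lambda>x. fls_X * x) ` Oinf"
  unfolding piO_iff using assms by (cases "C = 0") (auto simp: fls_divide_subdegree)

lemma O_div:
  fixes C D :: "'a::field fls"
  assumes "C \<noteq> 0" "D = 0 \<or> fls_subdegree D \<ge> fls_subdegree C"
  shows "D / C \<in> Oinf"
  unfolding Oinf_iff using assms by (cases "D = 0") (auto simp: fls_divide_subdegree)

lemma dec0:
  fixes A B C D :: "'a::field fls"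
  assumes D: "D \<noteq> 0" and det: "mdet (A,B,C,D) \<noteq> 0"
    and CD: "C = 0 \<or> fls_subdegree C > fls_subdegree D"
    and k: "int k = fls_subdegree (mdet (A,B,C,D)) - 2 * fls_subdegree D"
  shows "\<exists>u. edge (A,B,C,D) = edge (mmul (fls_X ^ k, u, 0, 1) (mpow (0, 1, fls_X, 0) 0))"
proof -
  define \<Delta> where "\<Delta> = mdet (A,B,C,D)"
  have \<Delta>: "\<Delta> \<noteq> 0" using det by (simp add: \<Delta>_def)
  have Xk: "(fls_X :: 'a fls) ^ k \<noteq> 0" by simp
  define e where "e = \<Delta> / (D * D * fls_X ^ k)"
  have e0: "e \<noteq> 0" using \<Delta> D Xk by (simp add: e_def)
  have se: "fls_subdegree e = 0"
    using \<Delta> D Xk k by (simp add: e_def fls_divide_subdegree \<Delta>_def)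
  define kk :: "'a fls mat2" where "kk = (e, 0, C / D, 1 :: 'a fls)"
  have dk: "mdet kk = e" by (simp add: kk_def mdet_def)
  have kk: "kk \<in> Iwahori"
    unfolding Iwahori_def kk_def using e0 se piO_div[OF D CD]
    by (simp add: mdet_def Oinf_iff)
  have eq: "(A,B,C,D) = mmul (fls_X ^ k, B / D, 0, 1) (mmul (mscale D mId) kk)"
  proof -
    have "fls_X ^ k * e * D + B / D * (C / D * D) = A"
      using D Xk unfolding e_def \<Delta>_def mdet_def by (simp add: field_simps)
    moreover have "B / D * D = B" using D by simp
    moreover have "C / D * D = C" using D by simp
    ultimately show ?thesis
      by (simp add: kk_def mmul_def mscale_def mId_def mult_ac)
  qed
  show ?thesis
    by (rule exI[of _ "B / D"]) (simp add: edge_eq[OF D kk eq])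
qed

lemma alg1:
  fixes A B D zz X p :: "'b::field"
  assumes "zz \<noteq> 0" "X \<noteq> 0" "p \<noteq> 0"
  shows "(A,B,zz*X,D) = mmul (mmul (p, A/(zz*X), 0, 1) (mmul (0,1,X,0) mId))
     (mmul (mscale zz mId) (1, D/(zz*X), 0, -(X*(A*D - B*(zz*X)))/((zz*X)*(zz*X)*p)))"
  using assms by (simp add: mmul_def mscale_def mId_def field_simps)

lemma dec1:
  fixes A B C D :: "'a::field fls"
  assumes C: "C \<noteq> 0" and det: "mdet (A,B,C,D) \<noteq> 0"
    and CD: "D = 0 \<or> fls_subdegree D \<ge> fls_subdegree C"
    and k: "int k = fls_subdegree (mdet (A,B,C,D)) - 2 * fls_subdegree C + 1"
  shows "\<exists>u. edge (A,B,C,D) = edge (mmul (fls_X ^ k, u, 0, 1) (mpow (0, 1, fls_X, 0) 1))"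
proof -
  define \<Delta> where "\<Delta> = mdet (A,B,C,D)"
  have \<Delta>: "\<Delta> \<noteq> 0" using det by (simp add: \<Delta>_def)
  have Xk: "(fls_X :: 'a fls) ^ k \<noteq> 0" by simp
  have X: "(fls_X :: 'a fls) \<noteq> 0" by simp
  define f where "f = - (fls_X * \<Delta>) / (C * C * fls_X ^ k)"
  have f0: "f \<noteq> 0" using \<Delta> C Xk by (simp add: f_def)
  have sf: "fls_subdegree f = 0"
    using \<Delta> C Xk k by (simp add: f_def fls_divide_subdegree \<Delta>_def)
  define kk :: "'a fls mat2" where "kk = (1, D / C, 0, f)"
  have dk: "mdet kk = f" by (simp add: kk_def mdet_def)
  have kk: "kk \<in> Iwahori"
    unfolding Iwahori_def kk_def using f0 sf O_div[OF C CD]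
    by (auto simp: mdet_def Oinf_iff intro!: image_eqI[of _ _ 0])
  obtain zz where Cz: "C = zz * fls_X" and z: "zz \<noteq> 0"
    using C X by (metis mult_eq_0_iff nonzero_eq_divide_eq)
  have eq: "(A,B,C,D) = mmul (mmul (fls_X ^ k, A / C, 0, 1) (mpow (0, 1, fls_X, 0) 1))
                           (mmul (mscale zz mId) kk)"
  proof -
    have md: "mdet (A,B,C,D) = A*D - B*C" by (simp add: mdet_def)
    have mp: "mpow M 1 = mmul M mId" for M :: "'a fls mat2" by simp
    show ?thesis
      unfolding kk_def f_def \<Delta>_def md mp
      using alg1[OF z X Xk, of A B D] unfolding Cz[symmetric] .
  qed
  show ?thesis
    by (rule exI[of _ "A / C"]) (simp only: edge_eq[OF z kk eq])
qed



lemma mmap_embA_mmul: "mmap embA (mmul P Q) = mmul (mmap embA P) (mmap embA Q :: 'a::field fls mat2)"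
  by (cases P; cases Q) (simp add: mmap_def mmul_def)

lemma mdet_mmap_embA: "mdet (mmap embA P) = (embA (mdet P) :: 'a::field fls)"
  by (cases P) (simp add: mmap_def mdet_def)

lemma mmap_embA_mId[simp]: "mmap embA mId = (mId :: 'a::field fls mat2)"
  by (simp add: mmap_def mId_def)

lemma actA_actA_e0:
  "actA g (actA h e0) = edge (mmap embA (mmul g h) :: 'a::field fls mat2)"
  unfolding actA_def act_def e0_def by (simp add: act_edge mmap_embA_mmul)

lemma pdeg_le_iff: "pdeg p \<le> pdeg q \<longleftrightarrow> (p = 0 \<or> (q \<noteq> 0 \<and> degree p \<le> degree q))"
  by (auto simp: pdeg_def)

lemma unit_embA_subdeg:
  fixes \<Delta> p :: "'a::field poly"
  assumes "is_unit \<Delta>" "p \<noteq> 0"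
  shows "fls_subdegree (embA (\<Delta> * p) :: 'a fls) = - int (degree p)"
proof -
  have D0: "\<Delta> \<noteq> 0" using assms by auto
  have "degree \<Delta> = 0" using is_unit_iff_degree[OF D0] assms by simp
  then show ?thesis using assms D0 by (simp add: embA_subdegree degree_mult_eq)
qed

lemma mId_Gamma0: "mId \<in> Gamma0 n"
  by (simp add: Gamma0_def GL2A_def mId_def mdet_def)

theorem lemma2p4:
  fixes n a b c d :: "'a::{field_gcd,finite} poly"
  assumes n_monic: "lead_coeff n = 1"
    and gamma: "(a, b, c, d) \<in> GL2A"
  shows
   "(let l = max (degree c) (degree d);
         \<epsilon> = (if pdeg c \<ge> pdeg d then 1 else 0 :: nat)
     in \<exists>u :: 'a fls. \<exists>\<gamma>0 \<in> Gamma0 n.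
          actA \<gamma>0 (actA (a, b, c, d) e0) =
          edge (mmul (piinf ^ (2 * l + \<epsilon>), u, 0, 1) (mpow (0, 1, piinf, 0) \<epsilon>)))
    \<and>
    (\<forall>x y :: 'a poly. gcd x y = 1 \<longrightarrow> gcd n (c * x + d * y) = 1 \<longrightarrow>
       (let \<delta> = max (degree x) (degree y);
            \<epsilon> = (if pdeg x > pdeg y then 0 else 1 :: nat);
            w = (0, -1, embA n, 0) :: 'a fls mat2
        in \<exists>u :: 'a fls. \<exists>\<gamma>0 \<in> Gamma0 n.
          actA \<gamma>0 (actA (a, b, c, d) e0) =
          edge (mmul w (mmul (piinf ^ (degree n + 2 * \<delta> + \<epsilon>), u, 0, 1)
                              (mpow (0, 1, piinf, 0) \<epsilon>)))))"
proof -
  define \<Delta> where "\<Delta> = mdet (a, b, c, d)"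
  have u\<Delta>: "is_unit \<Delta>" using gamma by (simp add: GL2A_def \<Delta>_def)
  have \<Delta>0: "\<Delta> \<noteq> 0" using u\<Delta> by auto
  have s\<Delta>: "fls_subdegree (embA \<Delta> :: 'a fls) = 0"
    using unit_embA_subdeg[OF u\<Delta>, of 1] by simp
  have e\<Delta>0: "(embA \<Delta> :: 'a fls) \<noteq> 0" using \<Delta>0 by simp
  have md: "mdet (mmap embA (a, b, c, d)) = (embA \<Delta> :: 'a fls)"
    by (simp add: mdet_mmap_embA \<Delta>_def)
  have mm: "mmap embA (a,b,c,d) = (embA a, embA b, embA c, embA d :: 'a fls)"
    by (simp add: mmap_def)
  have E1: "actA mId (actA (a, b, c, d) e0) = edge (embA a, embA b, embA c, embA d :: 'a fls)"
    by (simp add: actA_actA_e0 mm)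
  have P1: "\<exists>u :: 'a fls. \<exists>\<gamma>0 \<in> Gamma0 n.
          actA \<gamma>0 (actA (a, b, c, d) e0) =
          edge (mmul (piinf ^ (2 * max (degree c) (degree d) + (if pdeg c \<ge> pdeg d then 1 else 0)), u, 0, 1)
             (mpow (0, 1, piinf, 0) (if pdeg c \<ge> pdeg d then 1 else 0)))"
  proof (cases "pdeg c \<ge> pdeg d")
    case True
    have c0: "c \<noteq> 0"
    proof
      assume "c = 0"
      then have "d = 0" using True by (auto simp: pdeg_le_iff)
      then show False using \<Delta>0 \<open>c = 0\<close> by (simp add: \<Delta>_def mdet_def)
    qed
    have dc: "d = 0 \<or> degree d \<le> degree c" using True by (auto simp: pdeg_le_iff)
    have sc: "fls_subdegree (embA c :: 'a fls) = - int (degree c)" using c0 by (simp add: embA_subdegree)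
    have cond: "embA d = (0 :: 'a fls) \<or> fls_subdegree (embA d :: 'a fls) \<ge> fls_subdegree (embA c :: 'a fls)"
      using dc sc by (cases "d = 0") (auto simp: embA_subdegree)
    obtain u where u: "edge (embA a, embA b, embA c, embA d :: 'a fls)
        = edge (mmul (fls_X ^ (2 * degree c + 1), u, 0, 1) (mpow (0, 1, fls_X, 0) 1))"
      using dec1[of "embA c" "embA a" "embA b" "embA d" "2 * degree c + 1"] c0 cond md e\<Delta>0 s\<Delta> sc
      by (auto simp: mm)
    have "max (degree c) (degree d) = degree c" using dc by auto
    then show ?thesis using True u E1 mId_Gamma0 by (auto intro!: bexI[of _ mId])
  next
    case False
    have d0: "d \<noteq> 0" using False by (auto simp: pdeg_le_iff)
    have cd: "c = 0 \<or> degree c < degree d" using False by (auto simp: pdeg_le_iff)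
    have sd: "fls_subdegree (embA d :: 'a fls) = - int (degree d)" using d0 by (simp add: embA_subdegree)
    have cond: "embA c = (0 :: 'a fls) \<or> fls_subdegree (embA c :: 'a fls) > fls_subdegree (embA d :: 'a fls)"
      using cd sd by (cases "c = 0") (auto simp: embA_subdegree)
    obtain u where u: "edge (embA a, embA b, embA c, embA d :: 'a fls)
        = edge (mmul (fls_X ^ (2 * degree d), u, 0, 1) (mpow (0, 1, fls_X, 0) 0))"
      using dec0[of "embA d" "embA a" "embA b" "embA c" "2 * degree d"] d0 cond md e\<Delta>0 s\<Delta> sd
      by (auto simp: mm)
    have "max (degree c) (degree d) = degree d" using cd by auto
    then show ?thesis using False u E1 mId_Gamma0 by (auto intro!: bexI[of _ mId])
  qed
  show ?thesis
    unfolding Let_def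
  proof (intro conjI allI impI)
    show "\<exists>u :: 'a fls. \<exists>\<gamma>0 \<in> Gamma0 n.
          actA \<gamma>0 (actA (a, b, c, d) e0) =
          edge (mmul (piinf ^ (2 * max (degree c) (degree d) + (if pdeg c \<ge> pdeg d then 1 else 0)), u, 0, 1)
             (mpow (0, 1, piinf, 0) (if pdeg c \<ge> pdeg d then 1 else 0)))" by (rule P1)
  next
    fix x y :: "'a poly"
    assume xy: "gcd x y = 1" and nxy: "gcd n (c * x + d * y) = 1"
    show "\<exists>u :: 'a fls. \<exists>\<gamma>0 \<in> Gamma0 n.
          actA \<gamma>0 (actA (a, b, c, d) e0) =
          edge (mmul (0, -1, embA n, 0) (mmul (piinf ^ (degree n + 2 * max (degree x) (degree y)
               + (if pdeg x > pdeg y then 0 else 1)), u, 0, 1)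
                              (mpow (0, 1, piinf, 0) (if pdeg x > pdeg y then 0 else 1))))"
    proof -
      define r1 where "r1 = c * x + d * y"
      define r2 where "r2 = - (a * x + b * y)"
      have "coprime r1 n" using nxy by (simp add: r1_def coprime_iff_gcd_eq_1 gcd.commute)
      moreover have "coprime r1 r2"
      proof (rule coprimeI)
        fix h assume h1: "h dvd r1" and h2: "h dvd r2"
        have "r1 * a + r2 * c = \<Delta> * y" by (simp add: r1_def r2_def \<Delta>_def mdet_def algebra_simps)
        moreover have "r1 * b + r2 * d = \<Delta> * (- x)" by (simp add: r1_def r2_def \<Delta>_def mdet_def algebra_simps)
        ultimately have "h dvd \<Delta> * y" "h dvd \<Delta> * (- x)" using h1 h2 by (metis dvd_add dvd_mult2)+
        then have "h dvd y" "h dvd x" using u\<Delta> by (simp_all add: dvd_mult_unit_iff')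
        moreover have "coprime x y" using xy by (simp add: coprime_iff_gcd_eq_1)
        ultimately show "is_unit h" using coprime_common_divisor by blast
      qed
      ultimately have "coprime r1 (n * r2)" by simp
      then have "gcd r1 (n * r2) = 1" by simp
      then obtain s t where st: "s * r1 + t * (n * r2) = 1"
        using bezout_coefficients_fst_snd[of r1 "n * r2"] by metis
      define g0 where "g0 = (r1, r2, n * (- t), s)"
      have g0G: "g0 \<in> Gamma0 n"
        using st by (simp add: g0_def Gamma0_def GL2A_def mdet_def algebra_simps)
      define R where "R = n * (- t) * a + s * c"
      define S where "S = n * (- t) * b + s * d"
      have G: "mmul g0 (a,b,c,d) = (\<Delta> * y, - (\<Delta> * x), R, S)"
        by (simp add: g0_def mmul_def R_def S_def r1_def r2_def \<Delta>_def mdet_def algebra_simps)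
      have dg0: "mdet g0 = 1" using st by (simp add: g0_def mdet_def algebra_simps)
      have dG: "mdet (mmul g0 (a,b,c,d)) = \<Delta>"
        by (simp only: mdet_mmul dg0 \<Delta>_def mult_1)
      define eP where "eP = (embA (\<Delta> * y) :: 'a fls)"
      define eQ where "eQ = (embA (\<Delta> * x) :: 'a fls)"
      define eR where "eR = (embA R :: 'a fls)"
      define eS where "eS = (embA S :: 'a fls)"
      define en where "en = (embA n :: 'a fls)"
      have n0: "n \<noteq> 0" using n_monic by auto
      have en0: "en \<noteq> 0" using n0 by (simp add: en_def)
      have sen: "fls_subdegree en = - int (degree n)" using n0 by (simp add: en_def embA_subdegree)
      have M: "mmap embA (mmul g0 (a,b,c,d)) = (eP, - eQ, eR, eS)"
        by (simp add: G mmap_def eP_def eQ_def eR_def eS_def)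
      have dM: "eP * eS - (- eQ) * eR = embA \<Delta>"
        using mdet_mmap_embA[of "mmul g0 (a,b,c,d)", unfolded M dG] by (simp add: mdet_def)
      define N where "N = (eR / en, eS / en, - eP, eQ)"
      have wN: "mmul (0, -1, en, 0) N = (eP, - eQ, eR, eS)"
        using en0 by (simp add: N_def mmul_def)
      have dN: "mdet N = embA \<Delta> / en"
        unfolding dM[symmetric] N_def mdet_def using en0 by (simp add: field_simps)
      have dN0: "mdet N \<noteq> 0" using dN en0 e\<Delta>0 by simp
      have sdN: "fls_subdegree (mdet N) = int (degree n)"
        using dN en0 e\<Delta>0 s\<Delta> sen by (simp add: fls_divide_subdegree)
      have EE: "actA g0 (actA (a, b, c, d) e0) = mmul (0, -1, en, 0) ` edge N"
        by (simp add: actA_actA_e0 M wN[symmetric] act_edge)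
      have xy0: "\<not> (x = 0 \<and> y = 0)" using xy by auto
      show ?thesis
      proof (cases "pdeg x > pdeg y")
        case True
        have x0: "x \<noteq> 0" using True by (auto simp: pdeg_def)
        have yx: "y = 0 \<or> degree y < degree x" using True x0 by (auto simp: pdeg_def split: if_splits)
        have sQ: "fls_subdegree eQ = - int (degree x)"
          using unit_embA_subdeg[OF u\<Delta> x0] by (simp add: eQ_def)
        have Q0: "eQ \<noteq> 0" using x0 \<Delta>0 by (simp add: eQ_def)
        have cond: "- eP = 0 \<or> fls_subdegree (- eP) > fls_subdegree eQ"
          using yx sQ unit_embA_subdeg[OF u\<Delta>, of y] by (cases "y = 0") (auto simp: eP_def)
        have dN0': "mdet (eR / en, eS / en, - eP, eQ) \<noteq> 0" using dN0 unfolding N_def .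
        have kk: "int (degree n + 2 * degree x) = fls_subdegree (mdet (eR / en, eS / en, - eP, eQ)) - 2 * fls_subdegree eQ"
          using sdN sQ unfolding N_def by simp
        from dec0[OF Q0 dN0' cond kk] obtain u where
          u0: "edge (eR / en, eS / en, - eP, eQ) = edge (mmul (fls_X ^ (degree n + 2 * degree x), u, 0, 1) (mpow (0, 1, fls_X, 0) 0))"
          by blast
        have u: "edge N = edge (mmul (fls_X ^ (degree n + 2 * degree x), u, 0, 1) (mpow (0, 1, fls_X, 0) 0))"
          using u0 unfolding N_def .
        have "max (degree x) (degree y) = degree x" using yx by auto
        note mx = this
        have fin: "actA g0 (actA (a,b,c,d) e0) = edge (mmul (0,-1,en,0) (mmul (fls_X ^ (degree n + 2 * degree x + 0), u, 0, 1) (mpow (0, 1, fls_X, 0) 0)))"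
          using EE u by (simp add: act_edge)
        have eps: "(if pdeg x > pdeg y then 0 else 1::nat) = 0" using True by simp
        show ?thesis unfolding eps mx en_def[symmetric] using fin g0G by blast
      next
        case False
        have y0: "y \<noteq> 0" using False xy0 by (auto simp: pdeg_def split: if_splits)
        have xy': "x = 0 \<or> degree x \<le> degree y" using False y0 by (auto simp: pdeg_def split: if_splits)
        have sP: "fls_subdegree (- eP) = - int (degree y)"
          using unit_embA_subdeg[OF u\<Delta> y0] by (simp add: eP_def)
        have P0: "- eP \<noteq> 0" using y0 \<Delta>0 by (simp add: eP_def)
        have cond: "eQ = 0 \<or> fls_subdegree eQ \<ge> fls_subdegree (- eP)"
          using xy' sP unit_embA_subdeg[OF u\<Delta>, of x] by (cases "x = 0") (auto simp: eQ_def)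
        have dN0': "mdet (eR / en, eS / en, - eP, eQ) \<noteq> 0" using dN0 unfolding N_def .
        have kk: "int (degree n + 2 * degree y + 1) = fls_subdegree (mdet (eR / en, eS / en, - eP, eQ)) - 2 * fls_subdegree (- eP) + 1"
          using sdN sP unfolding N_def by simp
        from dec1[OF P0 dN0' cond kk] obtain u where
          u0: "edge (eR / en, eS / en, - eP, eQ) = edge (mmul (fls_X ^ (degree n + 2 * degree y + 1), u, 0, 1) (mpow (0, 1, fls_X, 0) 1))"
          by blast
        have u: "edge N = edge (mmul (fls_X ^ (degree n + 2 * degree y + 1), u, 0, 1) (mpow (0, 1, fls_X, 0) 1))"
          using u0 unfolding N_def .
        have "max (degree x) (degree y) = degree y" using xy' by auto
        note mx = this
        have fin: "actA g0 (actA (a,b,c,d) e0) = edge (mmul (0,-1,en,0) (mmul (fls_X ^ (degree n + 2 * degree y + 1), u, 0, 1) (mpow (0, 1, fls_X, 0) 1)))"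
          using EE u by (simp add: act_edge)
        have eps: "(if pdeg x > pdeg y then 0 else 1::nat) = 1" using False by simp
        show ?thesis unfolding eps mx en_def[symmetric] using fin g0G by blast
      qed
    qed
  qed
qed


end
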